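(* Let $d$, $N$, $n$ be positive integers with $d \geq 2$ and $N \geq 2$. Then there exists a strictly stationary, $N$-tuplewise independent random field $X := (X_k, k \in \mathbf{Z}^d)$ of real-valued random variables such that (i) $\rho^*(X,n) = 1$ and (ii) $\rho(X,1) = 1$ and $\rho(X,2) = 0$.
   Context: All random variables are defined on a common probability space $(\Omega,\mathcal{F},P)$. For $k\in\mathbf{Z}^d$, $k=(k_1,\dots,k_d)$ and $\|k\|$ is the Euclidean norm; for nonempty disjoint $S,T\subset\mathbf{Z}^d$, $\mathrm{dist}(S,T)=\min_{s\in S,t\in T}\|s-t\|$. A random field $X=(X_k,k\in\mathbf{Z}^d)$ satisfies $N$-tuplewise independence if for every choice of $N$ distinct $k(1),\dots,k(N)\in\mathbf{Z}^d$ the random variables $X_{k(1)},\dots,X_{k(N)}$ are independent. For $\sigma$-fields $\mathcal{A},\mathcal{B}\subset\mathcal{F}$: $\rho(\mathcal{A},\mathcal{B}) := \sup|\mathrm{Corr}(f,g)|$ over all square-integrable $f$ that are $\mathcal{A}$-measurable and $g$ that are $\mathcal{B}$-measurable. For a random field $X$ and $m\in\mathbf{N}$: $\rho(X,m)$ is the supremum of $\rho(\sigma(X_k,k\in S),\sigma(X_k,k\in T))$ over all pairs $S=\{k\in\mathbf{Z}^d:k_u\le j\}$, $T=\{k\in\mathbf{Z}^d:k_u\ge j+m\}$ with $j\in\mathbf{Z}$, $u\in\{1,\dots,d\}$; $\rho^*(X,m)$ is the same supremum over all nonempty disjoint $S,T\subset\mathbf{Z}^d$ with $\mathrm{dist}(S,T)\ge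 m$. *)

theory Defs
  imports "HOL-Probability.Probability"
begin

text \<open>Lattice points of Z^d are functions 'd \<Rightarrow> int for a finite type 'd with CARD('d) = d.\<close>

definition lat_norm :: "('d::finite \<Rightarrow> int) \<Rightarrow> real" where
  "lat_norm k = sqrt (\<Sum>u\<in>UNIV. (real_of_int (k u))\<^sup>2)"

definition lat_dist :: "('d::finite \<Rightarrow> int) set \<Rightarrow> ('d \<Rightarrow> int) set \<Rightarrow> real" where
  "lat_dist S T = Inf {lat_norm (\<lambda>u. s u - t u) | s t. s \<in> S \<and> t \<in> T}"

definition field_sigma :: "'a measure \<Rightarrow> ('i \<Rightarrow> 'a \<Rightarrow> real) \<Rightarrow> 'i set \<Rightarrow> 'a measure" where
  "field_sigma M X S = sigma (space M) {X k -` B \<inter> space M | k B. k \<in> S \<and> B \<in> sets borel}"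

definition covar :: "'a measure \<Rightarrow> ('a \<Rightarrow> real) \<Rightarrow> ('a \<Rightarrow> real) \<Rightarrow> real" where
  "covar M f g = (\<integral>x. (f x - (\<integral>y. f y \<partial>M)) * (g x - (\<integral>y. g y \<partial>M)) \<partial>M)"

definition corr :: "'a measure \<Rightarrow> ('a \<Rightarrow> real) \<Rightarrow> ('a \<Rightarrow> real) \<Rightarrow> real" where
  "corr M f g = covar M f g / sqrt (covar M f f * covar M g g)"

text \<open>Maximal correlation rho(A,B); pairs with a degenerate (zero-variance) variable
  contribute 0 (division by zero), and the empty supremum is taken to be 0.\<close>
definition max_corr :: "'a measure \<Rightarrow> 'a measure \<Rightarrow> 'a measure \<Rightarrow> real" where
  "max_corr M A B = Sup ({0} \<union> {\<bar>corr M f g\<bar> | f g.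
       f \<in> borel_measurable A \<and> g \<in> borel_measurable B \<and>
       integrable M (\<lambda>x. (f x)\<^sup>2) \<and> integrable M (\<lambda>x. (g x)\<^sup>2)})"

definition rho_half :: "'a measure \<Rightarrow> (('d::finite \<Rightarrow> int) \<Rightarrow> 'a \<Rightarrow> real) \<Rightarrow> nat \<Rightarrow> real" where
  "rho_half M X m = Sup {max_corr M (field_sigma M X {k. k u \<le> j}) (field_sigma M X {k. k u \<ge> j + int m})
      | j u. True}"

definition rho_star :: "'a measure \<Rightarrow> (('d::finite \<Rightarrow> int) \<Rightarrow> 'a \<Rightarrow> real) \<Rightarrow> nat \<Rightarrow> real" where
  "rho_star M X m = Sup {max_corr M (field_sigma M X S) (field_sigma M X T)
      | S T. S \<noteq> {} \<and> T \<noteq> {} \<and> S \<inter> T = {} \<and> lat_dist S T \<ge> real m}"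

definition strictly_stationary :: "'a measure \<Rightarrow> (('d::finite \<Rightarrow> int) \<Rightarrow> 'a \<Rightarrow> real) \<Rightarrow> bool" where
  "strictly_stationary M X \<longleftrightarrow> (\<forall>h.
     distr M (Pi\<^sub>M UNIV (\<lambda>_. borel)) (\<lambda>\<omega> k. X (\<lambda>u. k u + h u) \<omega>) =
     distr M (Pi\<^sub>M UNIV (\<lambda>_. borel)) (\<lambda>\<omega> k. X k \<omega>))"

definition tuplewise_indep :: "'a measure \<Rightarrow> nat \<Rightarrow> ('i \<Rightarrow> 'a \<Rightarrow> real) \<Rightarrow> bool" where
  "tuplewise_indep M N X \<longleftrightarrow>
     (\<forall>K. finite K \<and> card K = N \<longrightarrow> prob_space.indep_vars M (\<lambda>_. borel) X K)"

end

theory Submission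
  imports Defs
begin

definition rb :: "nat \<Rightarrow> real \<Rightarrow> bool" where "rb i x = bit (nat \<lfloor>x\<rfloor>) i"

definition enc :: "nat \<Rightarrow> (nat \<Rightarrow> bool) \<Rightarrow> real" where
  "enc K v = (\<Sum>i<K. (if v i then 2^i else 0))"

lemma enc_nat: "enc K v = real (horner_sum of_bool 2 (map v [0..<K]) :: nat)"
  by (simp add: enc_def horner_sum_eq_sum atLeast0LessThan of_bool_def)
     (intro sum.cong; simp)

lemma rb_enc: "rb j (enc K v) \<longleftrightarrow> j < K \<and> v j"
  unfolding enc_nat rb_def
  by (simp only: floor_of_nat nat_int bit_horner_sum_bit_iff) auto

definition blk :: "nat \<Rightarrow> (nat \<Rightarrow> bool) set" where
  "blk K = {v. (\<forall>i. K \<le> i \<longrightarrow> \<not> v i) \<and> even (card {i. i < K \<and> v i})}"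

definition qb :: "nat \<Rightarrow> (nat \<Rightarrow> bool) pmf" where "qb K = pmf_of_set (blk K)"

lemma blk_sub: "blk K \<subseteq> PiE_dflt {..<K} False (\<lambda>_. UNIV)"
  by (auto simp: blk_def PiE_dflt_def not_less)

lemma blk_finite: "finite (blk K)"
  by (rule finite_subset[OF blk_sub]) (intro finite_PiE_dflt; simp)

lemma blk_ne: "blk K \<noteq> {}"
proof -
  have "(\<lambda>_. False) \<in> blk K" by (simp add: blk_def)
  then show ?thesis by blast
qed

lemma set_qb: "set_pmf (qb K) = blk K"
  by (simp add: qb_def blk_finite blk_ne)

lemma card_split_m:
  fixes m K :: nat
  assumes "m < K"
  shows "card {i. i < K \<and> v i} = card {i. i < K \<and> i \<noteq> m \<and> v i} + (if v m then 1 else 0)"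
proof (cases "v m")
  case True
  have "{i. i < K \<and> v i} = insert m {i. i < K \<and> i \<noteq> m \<and> v i}" using True assms by auto
  moreover have "finite {i. i < K \<and> i \<noteq> m \<and> v i}" by (rule finite_subset[of _ "{..<K}"]) auto
  ultimately show ?thesis using True by simp
next
  case False
  have "{i. i < K \<and> v i} = {i. i < K \<and> i \<noteq> m \<and> v i}" using False by auto
  then show ?thesis using False by simp
qed

lemma WB:
  assumes U: "U \<subseteq> {..<K}" and m: "m < K" "m \<notin> U"
  shows "measure_pmf.prob (qb K) {v. \<forall>i\<in>U. v i \<in> S i} = (\<Prod>i\<in>U. real (card (S i)) / 2)"
proof -
  define f where "f v = v(m := False)" for v :: "nat \<Rightarrow> bool"
  define A where "A = {..<K} - {m}"
  have finA: "finite A" by (simp add: A_def)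
  have inj: "inj_on f (blk K)"
  proof (rule inj_onI)
    fix v w assume v: "v \<in> blk K" and w: "w \<in> blk K" and e: "f v = f w"
    have o: "\<And>i. i \<noteq> m \<Longrightarrow> v i = w i" using e unfolding f_def by (metis fun_upd_other)
    have s: "{i. i < K \<and> i \<noteq> m \<and> v i} = {i. i < K \<and> i \<noteq> m \<and> w i}" using o by auto
    have "v m = w m"
      using v w card_split_m[OF m(1), of v] card_split_m[OF m(1), of w] s
      by (auto simp: blk_def split: if_splits)
    then show "v = w" using o by (intro ext) metis
  qed
  have img: "f ` blk K = PiE_dflt A False (\<lambda>_. UNIV)"
  proof
    show "f ` blk K \<subseteq> PiE_dflt A False (\<lambda>_. UNIV)"
      by (auto simp: f_def A_def PiE_dflt_def blk_def not_less split: if_splits)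
  next
    show "PiE_dflt A False (\<lambda>_. UNIV) \<subseteq> f ` blk K"
    proof
      fix w assume w: "w \<in> PiE_dflt A False (\<lambda>_. UNIV)"
      define v where "v = w(m := odd (card {i. i < K \<and> w i}))"
      have wm: "\<not> w m" using w by (auto simp: PiE_dflt_def A_def)
      have wK: "\<And>i. K \<le> i \<Longrightarrow> \<not> w i" using w by (auto simp: PiE_dflt_def A_def)
      have s: "{i. i < K \<and> i \<noteq> m \<and> v i} = {i. i < K \<and> w i}" using wm by (auto simp: v_def)
      have "even (card {i. i < K \<and> v i})"
        using card_split_m[OF m(1), of v] s by (simp add: v_def)
      moreover have "\<forall>i. K \<le> i \<longrightarrow> \<not> v i" using wK m by (auto simp: v_def)
      ultimately have "v \<in> blk K" by (simp add: blk_def)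
      moreover have "f v = w" using wm by (auto simp: f_def v_def fun_upd_idem)
      ultimately show "w \<in> f ` blk K" by blast
    qed
  qed
  have mp: "map_pmf f (qb K) = Pi_pmf A False (\<lambda>_. pmf_of_set UNIV)"
    unfolding qb_def
    by (subst map_pmf_of_set_inj[OF inj blk_ne blk_finite], subst Pi_pmf_of_set) (auto simp: img finA)
  have "measure_pmf.prob (qb K) {v. \<forall>i\<in>U. v i \<in> S i} =
        measure_pmf.prob (qb K) (f -` Pi A (\<lambda>i. if i \<in> U then S i else UNIV))"
    using U m by (intro arg_cong[where f="measure_pmf.prob (qb K)"]) (auto simp: f_def A_def Pi_def)
  also have "\<dots> = measure_pmf.prob (map_pmf f (qb K)) (Pi A (\<lambda>i. if i \<in> U then S i else UNIV))"
    by simp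
  also have "\<dots> = (\<Prod>i\<in>A. measure_pmf.prob (pmf_of_set UNIV) (if i \<in> U then S i else UNIV))"
    unfolding mp by (rule measure_Pi_pmf_Pi[OF finA])
  also have "\<dots> = (\<Prod>i\<in>A. if i \<in> U then real (card (S i)) / 2 else 1)"
    by (intro prod.cong refl) (simp add: measure_pmf_of_set)
  also have "\<dots> = (\<Prod>i\<in>U. real (card (S i)) / 2)"
    using U m finA by (subst prod.If_cases) (auto simp: A_def intro!: prod.cong arg_cong2[where f="(*)"] prod.neutral_const)
  finally show ?thesis .
qed

definition cmp :: "nat \<Rightarrow> nat \<Rightarrow> real \<Rightarrow> bool" where
  "cmp K i x = (if i = 0 then odd (card {j. 1 \<le> j \<and> j < K \<and> rb j x}) else rb i x)"

lemma cmp_enc: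
  assumes v: "v \<in> blk K" and i: "i < K"
  shows "cmp K i (enc K v) = v i"
proof (cases "i = 0")
  case True
  have s: "{j. 1 \<le> j \<and> j < K \<and> rb j (enc K v)} = {j. j < K \<and> j \<noteq> 0 \<and> v j}"
    by (auto simp: rb_enc)
  have "even (card {j. j < K \<and> v j})" using v by (simp add: blk_def)
  then show ?thesis using card_split_m[OF i, of v] True s by (auto simp: cmp_def split: if_splits)
next
  case False
  then show ?thesis using i by (simp add: cmp_def rb_enc)
qed

definition QQ :: "nat \<Rightarrow> real measure" where "QQ K = measure_pmf (map_pmf (enc K) (qb K))"

lemma prob_space_QQ: "prob_space (QQ K)"
  by (simp add: QQ_def measure_pmf.prob_space_axioms)

lemma sets_QQ[simp]: "sets (QQ K) = UNIV" and space_QQ[simp]: "space (QQ K) = UNIV"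
  by (simp_all add: QQ_def)

definition MM :: "nat \<Rightarrow> (('d::finite \<Rightarrow> int) \<Rightarrow> real) measure" where
  "MM K = PiM UNIV (\<lambda>_. QQ K)"

interpretation QP: product_prob_space "(\<lambda>_. QQ K) :: ('d::finite \<Rightarrow> int) \<Rightarrow> real measure" UNIV for K
  by (intro product_prob_spaceI prob_space_QQ)

lemma prob_space_MM: "prob_space (MM K)"
  unfolding MM_def by (rule QP.P.prob_space_axioms)

lemma space_MM[simp]: "space (MM K) = UNIV"
  by (simp add: MM_def space_PiM)

definition Bt :: "nat \<Rightarrow> (nat \<Rightarrow> 'd::finite \<Rightarrow> int) \<Rightarrow> nat \<Rightarrow> ('d \<Rightarrow> int) \<Rightarrow> (('d \<Rightarrow> int) \<Rightarrow> real) \<Rightarrow> bool"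
  where "Bt K p i m \<omega> = cmp K i (\<omega> (\<lambda>u. m u - p i u))"

definition ev :: "nat \<Rightarrow> (nat \<Rightarrow> 'd::finite \<Rightarrow> int) \<Rightarrow> (nat \<times> ('d \<Rightarrow> int)) set \<Rightarrow> (nat \<times> ('d \<Rightarrow> int) \<Rightarrow> bool set) \<Rightarrow> (('d \<Rightarrow> int) \<Rightarrow> real) set"
  where "ev K p F S = {\<omega>. \<forall>x\<in>F. Bt K p (fst x) (snd x) \<omega> \<in> S x}"

definition blkset :: "(nat \<Rightarrow> 'd::finite \<Rightarrow> int) \<Rightarrow> (nat \<times> ('d \<Rightarrow> int)) set \<Rightarrow> ('d \<Rightarrow> int) \<Rightarrow> nat set"
  where "blkset p F h = {i. (i, \<lambda>u. h u + p i u) \<in> F}"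

definition hs :: "(nat \<Rightarrow> 'd::finite \<Rightarrow> int) \<Rightarrow> (nat \<times> ('d \<Rightarrow> int)) set \<Rightarrow> ('d \<Rightarrow> int) set"
  where "hs p F = (\<lambda>x. \<lambda>u. snd x u - p (fst x) u) ` F"

lemma blockprod:
  assumes F: "finite F" "F \<subseteq> {..<K} \<times> UNIV"
  shows "measure (MM K) (ev K p F S) =
    (\<Prod>h\<in>hs p F. measure_pmf.prob (qb K) {v. \<forall>i\<in>blkset p F h. v i \<in> S (i, \<lambda>u. h u + p i u)})"
proof -
  define H where "H = hs p F"
  define A where "A h = {x. \<forall>i\<in>blkset p F h. cmp K i x \<in> S (i, \<lambda>u. h u + p i u)}" for h
  have finH: "finite H" using F by (simp add: H_def hs_def)
  have e: "ev K p F S = prod_emb UNIV (\<lambda>_. QQ K) H (PiE H A)"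
  proof (intro set_eqI iffI)
    fix \<omega> assume w: "\<omega> \<in> ev K p F S"
    show "\<omega> \<in> prod_emb UNIV (\<lambda>_. QQ K) H (PiE H A)"
    proof -
      have "\<omega> h \<in> A h" if "h \<in> H" for h
        unfolding A_def blkset_def using w by (auto simp: ev_def Bt_def)
      then show ?thesis by (auto simp: prod_emb_def PiE_iff)
    qed
  next
    fix \<omega> assume w: "\<omega> \<in> prod_emb UNIV (\<lambda>_. QQ K) H (PiE H A)"
    show "\<omega> \<in> ev K p F S"
      unfolding ev_def
    proof (intro CollectI ballI)
      fix x assume x: "x \<in> F"
      obtain i m where xe: "x = (i, m)" by (cases x)
      have h: "(\<lambda>u. m u - p i u) \<in> H" using x xe by (force simp: H_def hs_def)
      have "\<omega> ((\<lambda>u. m u - p i u)) \<in> A ((\<lambda>u. m u - p i u))" using w h by (auto simp: prod_emb_def)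
      then have "\<forall>ia\<in>blkset p F (\<lambda>u. m u - p i u). cmp K ia (\<omega> (\<lambda>u. m u - p i u)) \<in> S (ia, \<lambda>u. (\<lambda>u. m u - p i u) u + p ia u)"
        by (simp add: A_def)
      moreover have eq: "(\<lambda>u. (\<lambda>u. m u - p i u) u + p i u) = m" by simp
      moreover have "i \<in> blkset p F (\<lambda>u. m u - p i u)" using x xe eq by (simp add: blkset_def)
      ultimately have "cmp K i (\<omega> (\<lambda>u. m u - p i u)) \<in> S (i, \<lambda>u. (\<lambda>u. m u - p i u) u + p i u)" by blast
      then have "cmp K i (\<omega> (\<lambda>u. m u - p i u)) \<in> S (i, m)" by simp
      then show "Bt K p (fst x) (snd x) \<omega> \<in> S x" using xe by (simp add: Bt_def)
    qed
  qed
  have "measure (MM K) (ev K p F S) = (\<Prod>h\<in>H. measure (QQ K) (A h))"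
    unfolding e MM_def using QP.measure_PiM_emb[of H A K] finH by simp
  also have "\<dots> = (\<Prod>h\<in>H. measure_pmf.prob (qb K) {v. \<forall>i\<in>blkset p F h. v i \<in> S (i, \<lambda>u. h u + p i u)})"
  proof (intro prod.cong refl)
    fix h assume "h \<in> H"
    have "measure (QQ K) (A h) = measure_pmf.prob (qb K) (enc K -` A h)"
      by (simp add: QQ_def)
    also have "\<dots> = measure_pmf.prob (qb K) {v. \<forall>i\<in>blkset p F h. v i \<in> S (i, \<lambda>u. h u + p i u)}"
    proof (rule measure_prob_cong_0)
      fix v assume v: "v \<in> (enc K -` A h) - {v. \<forall>i\<in>blkset p F h. v i \<in> S (i, \<lambda>u. h u + p i u)}"
      have "v \<notin> blk K"
      proof
        assume b: "v \<in> blk K"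
        have "\<And>i. i \<in> blkset p F h \<Longrightarrow> i < K" using F(2) by (auto simp: blkset_def)
        then show False using v cmp_enc[OF b] by (auto simp: A_def)
      qed
      then show "pmf (qb K) v = 0" by (simp add: set_qb pmf_eq_0_set_pmf)
    next
      fix v assume v: "v \<in> {v. \<forall>i\<in>blkset p F h. v i \<in> S (i, \<lambda>u. h u + p i u)} - (enc K -` A h)"
      have "v \<notin> blk K"
      proof
        assume b: "v \<in> blk K"
        have "\<And>i. i \<in> blkset p F h \<Longrightarrow> i < K" using F(2) by (auto simp: blkset_def)
        then show False using v cmp_enc[OF b] by (auto simp: A_def)
      qed
      then show "pmf (qb K) v = 0" by (simp add: set_qb pmf_eq_0_set_pmf)
    qed
    finally show "measure (QQ K) (A h) = measure_pmf.prob (qb K) {v. \<forall>i\<in>blkset p F h. v i \<in> S (i, \<lambda>u. h u + p i u)}" .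
  qed
  finally show ?thesis by (simp add: H_def)
qed

definition XX :: "nat \<Rightarrow> (nat \<Rightarrow> 'd::finite \<Rightarrow> int) \<Rightarrow> ('d \<Rightarrow> int) \<Rightarrow> (('d \<Rightarrow> int) \<Rightarrow> real) \<Rightarrow> real"
  where "XX K p m \<omega> = enc K (\<lambda>i. Bt K p i m \<omega>)"

lemma Bt_meas[measurable]: "Bt K p i m \<in> measurable (MM K) (count_space UNIV)"
proof -
  have "(\<lambda>\<omega>. \<omega> (\<lambda>u. m u - p i u)) \<in> measurable (MM K) (QQ K)"
    unfolding MM_def by (rule measurable_component_singleton) simp
  moreover have "cmp K i \<in> measurable (QQ K) (count_space UNIV)"
    by (simp add: QQ_def)
  ultimately show ?thesis unfolding Bt_def[abs_def]
    by (rule measurable_compose[where f="\<lambda>\<omega>. \<omega> _"])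
qed

lemma Bt_pred[measurable]: "Measurable.pred (MM K) (Bt K p i m)"
  using Bt_meas by simp

lemma XX_meas[measurable]: "XX K p m \<in> borel_measurable (MM K)"
  unfolding XX_def[abs_def] enc_def by measurable

lemma ev_sets:
  assumes "finite F"
  shows "ev K p F S \<in> sets (MM K)"
proof (cases "F = {}")
  case True
  then have "ev K p F S = space (MM K)" by (simp add: ev_def)
  then show ?thesis by (metis sets.top)
next
  case False
  have "ev K p F S = (\<Inter>x\<in>F. Bt K p (fst x) (snd x) -` S x \<inter> space (MM K))"
    using False by (auto simp: ev_def)
  also have "\<dots> \<in> sets (MM K)"
    using assms False measurable_sets[OF Bt_meas, of _ K p] by (intro sets.finite_INT) auto
  finally show ?thesis .
qed

lemma prob_ev:
  assumes F: "finite F" "F \<subseteq> {..<K} \<times> UNIV"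
    and nc: "\<And>h. h \<in> hs p F \<Longrightarrow> \<exists>m<K. m \<notin> blkset p F h"
  shows "measure (MM K) (ev K p F S) = (\<Prod>x\<in>F. real (card (S x)) / 2)"
proof -
  have bs: "blkset p F h \<subseteq> {..<K}" for h using F(2) by (auto simp: blkset_def)
  have "measure (MM K) (ev K p F S) =
    (\<Prod>h\<in>hs p F. measure_pmf.prob (qb K) {v. \<forall>i\<in>blkset p F h. v i \<in> S (i, \<lambda>u. h u + p i u)})"
    by (rule blockprod[OF F])
  also have "\<dots> = (\<Prod>h\<in>hs p F. \<Prod>i\<in>blkset p F h. real (card (S (i, \<lambda>u. h u + p i u))) / 2)"
  proof (intro prod.cong refl)
    fix h assume "h \<in> hs p F"
    then obtain m where "m < K" "m \<notin> blkset p F h" using nc by blast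
    then show "measure_pmf.prob (qb K) {v. \<forall>i\<in>blkset p F h. v i \<in> S (i, \<lambda>u. h u + p i u)} =
      (\<Prod>i\<in>blkset p F h. real (card (S (i, \<lambda>u. h u + p i u))) / 2)"
      by (intro WB[OF bs])
  qed
  also have "\<dots> = (\<Prod>z\<in>Sigma (hs p F) (blkset p F). real (card (S (snd z, \<lambda>u. fst z u + p (snd z) u))) / 2)"
    using F(1) bs by (subst prod.Sigma) (auto simp: hs_def case_prod_beta intro: finite_subset[OF bs])
  also have "\<dots> = (\<Prod>x\<in>F. real (card (S x)) / 2)"
  proof (rule prod.reindex_bij_witness[where i="\<lambda>x. (\<lambda>u. snd x u - p (fst x) u, fst x)"
        and j="\<lambda>z. (snd z, \<lambda>u. fst z u + p (snd z) u)"])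
    fix z assume "z \<in> Sigma (hs p F) (blkset p F)"
    then show "(\<lambda>u. snd (snd z, \<lambda>u. fst z u + p (snd z) u) u - p (fst (snd z, \<lambda>u. fst z u + p (snd z) u)) u,
            fst (snd z, \<lambda>u. fst z u + p (snd z) u)) = z"
      by auto
    show "(snd z, \<lambda>u. fst z u + p (snd z) u) \<in> F" using \<open>z \<in> _\<close> by (auto simp: blkset_def)
    show "real (card (S (snd z, \<lambda>u. fst z u + p (snd z) u))) / 2 = real (card (S (snd z, \<lambda>u. fst z u + p (snd z) u))) / 2" ..
  next
    fix x assume x: "x \<in> F"
    show "(snd (\<lambda>u. snd x u - p (fst x) u, fst x), \<lambda>u. fst (\<lambda>u. snd x u - p (fst x) u, fst x) u + p (snd (\<lambda>u. snd x u - p (fst x) u, fst x)) u) = x"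
      by auto
    show "(\<lambda>u. snd x u - p (fst x) u, fst x) \<in> Sigma (hs p F) (blkset p F)"
      using x by (auto simp: hs_def blkset_def)
  qed
  finally show ?thesis .
qed

lemma bits_indep:
  assumes F: "finite F" "F \<noteq> {}" "F \<subseteq> {..<K} \<times> UNIV" and K2: "2 \<le> K"
    and nc: "\<And>h. h \<in> hs p F \<Longrightarrow> \<exists>m<K. m \<notin> blkset p F h"
  shows "prob_space.indep_vars (MM K) (\<lambda>_. count_space UNIV) (\<lambda>x. Bt K p (fst x) (snd x)) F"
proof -
  interpret prob_space "MM K" by (rule prob_space_MM)
  have sg: "sets (count_space (UNIV::bool set)) = sigma_sets (space (count_space UNIV)) (Pow UNIV)"
    using sigma_algebra.sigma_sets_eq[OF sigma_algebra_Pow[of "UNIV::bool set"]] by simp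
  show ?thesis
  proof (subst indep_vars_finite[where E="\<lambda>_. Pow UNIV"])
    show "\<forall>A\<in>Pi F (\<lambda>_. Pow UNIV). prob (\<Inter>j\<in>F. Bt K p (fst j) (snd j) -` A j \<inter> space (MM K)) =
        (\<Prod>j\<in>F. prob (Bt K p (fst j) (snd j) -` A j \<inter> space (MM K)))"
    proof
      fix A assume "A \<in> Pi F (\<lambda>_. Pow (UNIV :: bool set))"
      have l: "(\<Inter>j\<in>F. Bt K p (fst j) (snd j) -` A j \<inter> space (MM K)) = ev K p F A"
        using F(2) by (auto simp: ev_def)
      have r: "prob (Bt K p (fst j) (snd j) -` A j \<inter> space (MM K)) = real (card (A j)) / 2"
        if j: "j \<in> F" for j
      proof -
        have "Bt K p (fst j) (snd j) -` A j \<inter> space (MM K) = ev K p {j} A"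
          by (auto simp: ev_def)
        moreover have "measure (MM K) (ev K p {j} A) = (\<Prod>x\<in>{j}. real (card (A x)) / 2)"
        proof (rule prob_ev)
          show "{j} \<subseteq> {..<K} \<times> UNIV" using j F(3) by auto
          fix h assume "h \<in> hs p {j}"
          have "blkset p {j} h \<subseteq> {fst j}" by (auto simp: blkset_def)
          moreover have "(if fst j = 0 then 1 else 0) < K" "(if fst j = 0 then 1 else 0) \<noteq> fst j"
            using K2 by auto
          ultimately show "\<exists>m<K. m \<notin> blkset p {j} h" by blast
        qed simp
        ultimately show ?thesis by simp
      qed
      show "prob (\<Inter>j\<in>F. Bt K p (fst j) (snd j) -` A j \<inter> space (MM K)) =
        (\<Prod>j\<in>F. prob (Bt K p (fst j) (snd j) -` A j \<inter> space (MM K)))"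
        unfolding l using prob_ev[OF F(1) F(3) nc, of A] r by (auto intro!: prod.cong)
    qed
  qed (use F sg in \<open>auto simp: Int_stable_def\<close>)
qed

lemma X_indep:
  assumes Ks: "finite Ks" "card Ks < K" "Ks \<noteq> {}" and inj: "inj_on p {..<K}" and K2: "2 \<le> K"
  shows "prob_space.indep_vars (MM K) (\<lambda>_. borel) (XX K p) Ks"
proof -
  interpret prob_space "MM K" by (rule prob_space_MM)
  define F where "F = {..<K} \<times> Ks"
  have nc: "\<exists>m<K. m \<notin> blkset p F h" for h
  proof (rule ccontr)
    assume "\<not> (\<exists>m<K. m \<notin> blkset p F h)"
    then have all: "\<And>m. m < K \<Longrightarrow> (\<lambda>u. h u + p m u) \<in> Ks" by (auto simp: blkset_def F_def)
    have "inj_on (\<lambda>m. \<lambda>u. h u + p m u) {..<K}"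
    proof (rule inj_onI)
      fix x y assume "x \<in> {..<K}" "y \<in> {..<K}" "(\<lambda>u. h u + p x u) = (\<lambda>u. h u + p y u)"
      then have "p x = p y" by (metis add_left_cancel ext)
      then show "x = y" using inj \<open>x \<in> _\<close> \<open>y \<in> _\<close> by (meson inj_onD)
    qed
    then have "card {..<K} \<le> card Ks" using all Ks(1) by (intro card_inj_on_le) auto
    then show False using Ks(2) by simp
  qed
  have bi: "indep_vars (\<lambda>_. count_space UNIV) (\<lambda>x. Bt K p (fst x) (snd x)) F"
    using Ks K2 nc by (intro bits_indep) (auto simp: F_def)
  define G where "G k = {..<K} \<times> {k}" for k :: "'a \<Rightarrow> int"
  have r: "indep_vars (\<lambda>k. PiM (G k) (\<lambda>_. count_space UNIV))
      (\<lambda>k \<omega>. restrict (\<lambda>x. Bt K p (fst x) (snd x) \<omega>) (G k)) Ks"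
    by (rule indep_vars_restrict[OF bi]) (auto simp: G_def F_def disjoint_family_on_def)
  define Y where "Y k t = (\<Sum>i<K. if t (i, k) then 2 ^ i else 0 :: real)" for k :: "'a \<Rightarrow> int" and t
  have Ym: "Y k \<in> borel_measurable (PiM (G k) (\<lambda>_. count_space UNIV))" for k
  proof -
    have "(\<lambda>t. t (i, k)) \<in> measurable (PiM (G k) (\<lambda>_. count_space UNIV)) (count_space UNIV)" if "i < K" for i
      using that by (intro measurable_component_singleton) (auto simp: G_def)
    then show ?thesis unfolding Y_def by measurable
  qed
  have c: "indep_vars (\<lambda>_. borel) (\<lambda>k \<omega>. Y k (restrict (\<lambda>x. Bt K p (fst x) (snd x) \<omega>) (G k))) Ks"
    by (rule indep_vars_compose2[OF r Ym])
  show ?thesis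
  proof (rule indep_vars_cong[THEN iffD1, OF refl _ refl c])
    fix k assume "k \<in> Ks"
    show "(\<lambda>\<omega>. Y k (restrict (\<lambda>x. Bt K p (fst x) (snd x) \<omega>) (G k))) = XX K p k"
      by (auto simp: Y_def XX_def enc_def G_def intro!: sum.cong)
  qed
qed

definition PE :: "nat \<Rightarrow> (nat \<Rightarrow> 'd::finite \<Rightarrow> int) \<Rightarrow> ('d \<Rightarrow> int) set \<Rightarrow> (('d \<Rightarrow> int) \<Rightarrow> real) set set"
  where "PE K p L = {ev K p F S | F S. finite F \<and> F \<subseteq> {..<K} \<times> L}"

lemma ev_Int: "ev K p F S \<inter> ev K p F' S' =
   ev K p (F \<union> F') (\<lambda>x. (if x \<in> F then S x else UNIV) \<inter> (if x \<in> F' then S' x else UNIV))"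
  by (auto simp: ev_def)

lemma PE_Int_stable: "Int_stable (PE K p L)"
  unfolding Int_stable_def PE_def
proof safe
  fix F S F' S' assume "finite F" "F \<subseteq> {..<K} \<times> L" "finite F'" "F' \<subseteq> {..<K} \<times> L"
  then show "\<exists>F'' S''. ev K p F S \<inter> ev K p F' S' = ev K p F'' S'' \<and> finite F'' \<and> F'' \<subseteq> {..<K} \<times> L"
    by (intro exI[of _ "F \<union> F'"] exI[of _ "\<lambda>x. (if x \<in> F then S x else UNIV) \<inter> (if x \<in> F' then S' x else UNIV)"] conjI ev_Int) auto
qed

definition cq where
  "cq K p F S h = measure_pmf.prob (qb K) {v. \<forall>i\<in>blkset p F h. v i \<in> S (i, \<lambda>u. h u + p i u)}"

lemma cq_empty: "blkset p F h = {} \<Longrightarrow> cq K p F S h = 1"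
  by (simp add: cq_def)

lemma blkset_hs: "h \<notin> hs p F \<Longrightarrow> blkset p F h = {}"
proof -
  assume h: "h \<notin> hs p F"
  { fix i assume "i \<in> blkset p F h"
    then have "(i, \<lambda>u. h u + p i u) \<in> F" by (simp add: blkset_def)
    then have "(\<lambda>u. snd (i, \<lambda>u. h u + p i u) u - p (fst (i, \<lambda>u. h u + p i u)) u) \<in> hs p F"
      unfolding hs_def by (rule imageI)
    then have False using h by simp }
  then show ?thesis by blast
qed

lemma prob_ev_cq:
  assumes "finite F" "F \<subseteq> {..<K} \<times> UNIV" and that: "hs p F \<subseteq> H" "finite H"
  shows "measure (MM K) (ev K p F S) = (\<Prod>h\<in>H. cq K p F S h)"
proof -
  have "measure (MM K) (ev K p F S) = (\<Prod>h\<in>hs p F. cq K p F S h)"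
    unfolding cq_def by (rule blockprod[OF assms(1,2)])
  also have "\<dots> = (\<Prod>h\<in>H. cq K p F S h)"
    using that by (intro prod.mono_neutral_left) (auto simp: cq_empty blkset_hs)
  finally show ?thesis .
qed

lemma slab_indep:
  assumes LR: "L \<inter> R = {}"
    and str: "\<And>h i i'. i < K \<Longrightarrow> i' < K \<Longrightarrow> (\<lambda>u. h u + p i u) \<in> L \<Longrightarrow> (\<lambda>u. h u + p i' u) \<in> R \<Longrightarrow>
       \<exists>m<K. (\<lambda>u. h u + p m u) \<notin> L \<and> (\<lambda>u. h u + p m u) \<notin> R"
  shows "prob_space.indep_set (MM K) (sigma_sets UNIV (PE K p L)) (sigma_sets UNIV (PE K p R))"
proof -
  interpret prob_space "MM K" by (rule prob_space_MM)
  have "indep_set (PE K p L) (PE K p R)"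
    unfolding indep_sets2_eq
  proof (intro conjI ballI)
    show "PE K p L \<subseteq> events" "PE K p R \<subseteq> events" by (auto simp: PE_def intro: ev_sets)
    fix a b assume a: "a \<in> PE K p L" and b: "b \<in> PE K p R"
    then obtain F S F' S' where ab: "a = ev K p F S" "b = ev K p F' S'" and
      F: "finite F" "F \<subseteq> {..<K} \<times> L" and F': "finite F'" "F' \<subseteq> {..<K} \<times> R"
      unfolding PE_def by blast
    define S'' where "S'' x = (if x \<in> F then S x else UNIV) \<inter> (if x \<in> F' then S' x else UNIV)" for x
    define H where "H = hs p F \<union> hs p F'"
    have finH: "finite H" using F F' by (simp add: H_def hs_def)
    have hsU: "hs p (F \<union> F') \<subseteq> H" by (auto simp: H_def hs_def)
    have disj: "F \<inter> F' = {}" using F(2) F'(2) LR by auto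
    have key: "cq K p (F \<union> F') S'' h = cq K p F S h * cq K p F' S' h" for h
    proof -
      define U where "U = blkset p F h"
      define U' where "U' = blkset p F' h"
      have UU: "blkset p (F \<union> F') h = U \<union> U'" by (auto simp: U_def U'_def blkset_def)
      have UK: "U \<subseteq> {..<K}" "U' \<subseteq> {..<K}" using F(2) F'(2) by (auto simp: U_def U'_def blkset_def)
      have UL: "\<And>i. i \<in> U \<Longrightarrow> (\<lambda>u. h u + p i u) \<in> L" using F(2) by (auto simp: U_def blkset_def)
      have UR: "\<And>i. i \<in> U' \<Longrightarrow> (\<lambda>u. h u + p i u) \<in> R" using F'(2) by (auto simp: U'_def blkset_def)
      have dU: "U \<inter> U' = {}" using UL UR LR by blast
      have setU: "{v. \<forall>i\<in>U \<union> U'. v i \<in> S'' (i, \<lambda>u. h u + p i u)} =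
          {v. \<forall>i\<in>U \<union> U'. v i \<in> (if i \<in> U then S (i, \<lambda>u. h u + p i u) else S' (i, \<lambda>u. h u + p i u))}"
      proof -
        have "S'' (i, \<lambda>u. h u + p i u) = (if i \<in> U then S (i, \<lambda>u. h u + p i u) else S' (i, \<lambda>u. h u + p i u))"
          if "i \<in> U \<union> U'" for i
          using that dU disj by (auto simp: S''_def U_def U'_def blkset_def)
        then show ?thesis by auto
      qed
      show ?thesis
      proof (cases "U = {} \<or> U' = {}")
        case True
        then show ?thesis
        proof
          assume e: "U = {}"
          have "cq K p (F \<union> F') S'' h = cq K p F' S' h"
          proof -
            have "S'' (i, \<lambda>u. h u + p i u) = S' (i, \<lambda>u. h u + p i u)" if "i \<in> U'" for i
              using that e disj by (auto simp: S''_def U_def U'_def blkset_def)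
            then show ?thesis unfolding cq_def UU e U'_def[symmetric] by (auto intro!: arg_cong[where f="measure_pmf.prob _"])
          qed
          then show ?thesis using cq_empty[of p F h] e by (simp add: U_def)
        next
          assume e: "U' = {}"
          have "cq K p (F \<union> F') S'' h = cq K p F S h"
          proof -
            have "S'' (i, \<lambda>u. h u + p i u) = S (i, \<lambda>u. h u + p i u)" if "i \<in> U" for i
              using that e disj by (auto simp: S''_def U_def U'_def blkset_def)
            then show ?thesis unfolding cq_def UU e U_def[symmetric] by (auto intro!: arg_cong[where f="measure_pmf.prob _"])
          qed
          then show ?thesis using cq_empty[of p F' h] e by (simp add: U'_def)
        qed
      next
        case False
        then obtain i i' where "i \<in> U" "i' \<in> U'" by blast
        then obtain m where m: "m < K" "(\<lambda>u. h u + p m u) \<notin> L" "(\<lambda>u. h u + p m u) \<notin> R"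
          using str[of i i' h] UK UL UR by blast
        have mU: "m \<notin> U \<union> U'" using m UL UR by blast
        have "cq K p (F \<union> F') S'' h =
          (\<Prod>i\<in>U \<union> U'. real (card (if i \<in> U then S (i, \<lambda>u. h u + p i u) else S' (i, \<lambda>u. h u + p i u))) / 2)"
          unfolding cq_def UU setU using UK mU m(1) by (intro WB) auto
        also have "\<dots> = (\<Prod>i\<in>U. real (card (S (i, \<lambda>u. h u + p i u))) / 2) *
                        (\<Prod>i\<in>U'. real (card (S' (i, \<lambda>u. h u + p i u))) / 2)"
          using dU UK by (subst prod.union_disjoint) (auto intro: finite_subset intro!: arg_cong2[where f="(*)"] prod.cong)
        also have "\<dots> = cq K p F S h * cq K p F' S' h"
        proof -
          have "cq K p F S h = (\<Prod>i\<in>U. real (card (S (i, \<lambda>u. h u + p i u))) / 2)"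
            unfolding cq_def U_def[symmetric] using UK mU m(1) by (intro WB) auto
          moreover have "cq K p F' S' h = (\<Prod>i\<in>U'. real (card (S' (i, \<lambda>u. h u + p i u))) / 2)"
            unfolding cq_def U'_def[symmetric] using UK mU m(1) by (intro WB) auto
          ultimately show ?thesis by simp
        qed
        finally show ?thesis .
      qed
    qed
    have "prob (a \<inter> b) = prob (ev K p (F \<union> F') S'')"
      unfolding ab ev_Int S''_def ..
    also have "\<dots> = (\<Prod>h\<in>H. cq K p (F \<union> F') S'' h)"
      using F F' hsU finH by (intro prob_ev_cq) auto
    also have "\<dots> = (\<Prod>h\<in>H. cq K p F S h) * (\<Prod>h\<in>H. cq K p F' S' h)"
      by (simp add: key prod.distrib)
    also have "\<dots> = prob a * prob b"
      unfolding ab using F F' finH by (subst (1 2) prob_ev_cq) (auto simp: H_def)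
    finally show "prob (a \<inter> b) = prob a * prob b" .
  qed
  then show ?thesis
    using indep_set_sigma_sets[OF _ PE_Int_stable PE_Int_stable] by simp
qed

lemma space_field_sigma[simp]: "space (field_sigma (MM K) X S) = UNIV"
  by (simp add: field_sigma_def)

lemma sets_field_sigma:
  "sets (field_sigma (MM K) X S) = sigma_sets UNIV {X k -` B | k B. k \<in> S \<and> B \<in> sets borel}"
  unfolding field_sigma_def by (subst sets_measure_of) auto

lemma XX_meas_field:
  assumes "k \<in> S"
  shows "XX K p k \<in> borel_measurable (field_sigma (MM K) (XX K p) S)"
proof (rule measurableI)
  fix B :: "real set" assume "B \<in> sets borel"
  then show "XX K p k -` B \<inter> space (field_sigma (MM K) (XX K p) S) \<in> sets (field_sigma (MM K) (XX K p) S)"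
    using assms unfolding sets_field_sigma by auto
qed auto

lemma field_subalg: "subalgebra (MM K) (field_sigma (MM K) (XX K p) S)"
  unfolding subalgebra_def
proof
  show "space (field_sigma (MM K) (XX K p) S) = space (MM K)" by simp
  show "sets (field_sigma (MM K) (XX K p) S) \<subseteq> sets (MM K)"
    unfolding sets_field_sigma
  proof (rule sets.sigma_sets_subset')
    show "{XX K p k -` B |k B. k \<in> S \<and> B \<in> sets borel} \<subseteq> sets (MM K)"
      using measurable_sets[OF XX_meas] by auto
  qed (simp add: sets.top[of "MM K", simplified])
qed

lemma XX_vimage:
  "XX K p k -` B = \<Union> ((\<lambda>v. ev K p ({..<K} \<times> {k}) (\<lambda>x. {v (fst x)})) ` {v \<in> PiE_dflt {..<K} False (\<lambda>_. UNIV). enc K v \<in> B})"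
proof (intro set_eqI iffI)
  fix \<omega> assume w: "\<omega> \<in> XX K p k -` B"
  define v where "v i = (if i < K then Bt K p i k \<omega> else False)" for i
  have "enc K v = XX K p k \<omega>" by (simp add: XX_def enc_def v_def)
  then have "v \<in> {v \<in> PiE_dflt {..<K} False (\<lambda>_. UNIV). enc K v \<in> B}"
    using w by (auto simp: PiE_dflt_def v_def)
  moreover have "\<omega> \<in> ev K p ({..<K} \<times> {k}) (\<lambda>x. {v (fst x)})"
    by (auto simp: ev_def v_def)
  ultimately show "\<omega> \<in> \<Union> ((\<lambda>v. ev K p ({..<K} \<times> {k}) (\<lambda>x. {v (fst x)})) ` {v \<in> PiE_dflt {..<K} False (\<lambda>_. UNIV). enc K v \<in> B})"
    by blast
next
  fix \<omega> assume "\<omega> \<in> \<Union> ((\<lambda>v. ev K p ({..<K} \<times> {k}) (\<lambda>x. {v (fst x)})) ` {v \<in> PiE_dflt {..<K} False (\<lambda>_. UNIV). enc K v \<in> B})"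
  then obtain v where v: "enc K v \<in> B" and e: "\<omega> \<in> ev K p ({..<K} \<times> {k}) (\<lambda>x. {v (fst x)})" by auto
  have "XX K p k \<omega> = enc K v"
    using e by (auto simp: XX_def enc_def ev_def intro!: sum.cong)
  then show "\<omega> \<in> XX K p k -` B" using v by simp
qed

lemma field_sub_PE: "sets (field_sigma (MM K) (XX K p) L) \<subseteq> sigma_sets UNIV (PE K p L)"
  unfolding sets_field_sigma
proof (rule sigma_sets_mono, safe)
  fix k and B :: "real set" assume k: "k \<in> L"
  have fin: "finite (PiE_dflt {..<K} False (\<lambda>_. UNIV :: bool set))" by (intro finite_PiE_dflt) auto
  show "XX K p k -` B \<in> sigma_sets UNIV (PE K p L)"
    unfolding XX_vimage
  proof (rule sigma_sets_UNION)
    show "countable ((\<lambda>v. ev K p ({..<K} \<times> {k}) (\<lambda>x. {v (fst x)})) ` {v \<in> PiE_dflt {..<K} False (\<lambda>_. UNIV). enc K v \<in> B})"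
      using fin by (intro countable_finite) auto
    fix b assume "b \<in> (\<lambda>v. ev K p ({..<K} \<times> {k}) (\<lambda>x. {v (fst x)})) ` {v \<in> PiE_dflt {..<K} False (\<lambda>_. UNIV). enc K v \<in> B}"
    then have "b \<in> PE K p L" using k unfolding PE_def by blast
    then show "b \<in> sigma_sets UNIV (PE K p L)" by blast
  qed
qed

lemma covar_slab_zero:
  fixes f g :: "(('d::finite \<Rightarrow> int) \<Rightarrow> real) \<Rightarrow> real"
  assumes LR: "L \<inter> R = {}"
    and str: "\<And>h i i'. i < K \<Longrightarrow> i' < K \<Longrightarrow> (\<lambda>u. h u + p i u) \<in> L \<Longrightarrow> (\<lambda>u. h u + p i' u) \<in> R \<Longrightarrow>
       \<exists>m<K. (\<lambda>u. h u + p m u) \<notin> L \<and> (\<lambda>u. h u + p m u) \<notin> R"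
    and f: "f \<in> borel_measurable (field_sigma (MM K) (XX K p) L)" and g: "g \<in> borel_measurable (field_sigma (MM K) (XX K p) R)"
    and f2: "integrable (MM K) (\<lambda>x. (f x)\<^sup>2)" and g2: "integrable (MM K) (\<lambda>x. (g x)\<^sup>2)"
  shows "covar (MM K) f g = 0"
proof -
  interpret prob_space "MM K :: (('d \<Rightarrow> int) \<Rightarrow> real) measure" by (rule prob_space_MM)
  have fm[measurable]: "f \<in> borel_measurable (MM K)" by (rule measurable_from_subalg[OF field_subalg f])
  have gm[measurable]: "g \<in> borel_measurable (MM K)" by (rule measurable_from_subalg[OF field_subalg g])
  have fi: "integrable (MM K) f" by (rule square_integrable_imp_integrable[OF fm f2])
  have gi: "integrable (MM K) g" by (rule square_integrable_imp_integrable[OF gm g2])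
  have ind: "indep_set (sigma_sets UNIV (PE K p L)) (sigma_sets UNIV (PE K p R))"
    by (rule slab_indep[OF LR str])
  have sf: "sigma_sets (space (MM K)) {f -` A \<inter> space (MM K) |A. A \<in> sets borel} \<subseteq> sigma_sets UNIV (PE K p L)"
  proof -
    have "{f -` A \<inter> space (MM K) |A. A \<in> sets borel} \<subseteq> sets (field_sigma (MM K) (XX K p) L)"
      using measurable_sets[OF f] by auto
    then have "sigma_sets UNIV {f -` A \<inter> space (MM K) |A. A \<in> sets borel} \<subseteq> sigma_sets UNIV (PE K p L)"
      using field_sub_PE by (intro sigma_sets_mono) blast
    then show ?thesis by simp
  qed
  have sg: "sigma_sets (space (MM K)) {g -` A \<inter> space (MM K) |A. A \<in> sets borel} \<subseteq> sigma_sets UNIV (PE K p R)"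
  proof -
    have "{g -` A \<inter> space (MM K) |A. A \<in> sets borel} \<subseteq> sets (field_sigma (MM K) (XX K p) R)"
      using measurable_sets[OF g] by auto
    then have "sigma_sets UNIV {g -` A \<inter> space (MM K) |A. A \<in> sets borel} \<subseteq> sigma_sets UNIV (PE K p R)"
      using field_sub_PE by (intro sigma_sets_mono) blast
    then show ?thesis by simp
  qed
  have ivar: "indep_var borel f borel g"
    unfolding indep_var_eq
  proof
    show "random_variable borel f \<and> random_variable borel g" by simp
    show "indep_set (sigma_sets (space (MM K)) {f -` A \<inter> space (MM K) |A. A \<in> sets borel})
       (sigma_sets (space (MM K)) {g -` A \<inter> space (MM K) |A. A \<in> sets borel})"
      using ind sf sg unfolding indep_sets2_eq by blast
  qed
  define a where "a = (\<integral>y. f y \<partial>MM K)"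
  define b where "b = (\<integral>y. g y \<partial>MM K)"
  have ivar2: "indep_var borel ((\<lambda>x. x - a) \<circ> f) borel ((\<lambda>x. x - b) \<circ> g)"
    by (rule indep_var_compose[OF ivar]) auto
  have "covar (MM K) f g = (\<integral>x. (f x - a) * (g x - b) \<partial>MM K)"
    by (simp add: covar_def a_def b_def)
  also have "\<dots> = (\<integral>x. (f x - a) \<partial>MM K) * (\<integral>x. (g x - b) \<partial>MM K)"
    using indep_var_lebesgue_integral[OF ivar2] fi gi by (simp add: o_def)
  also have "(\<integral>x. (f x - a) \<partial>MM K) = 0"
  proof -
    have "(\<integral>x. (f x - a) \<partial>MM K) = (\<integral>x. f x \<partial>MM K) - (\<integral>x. a \<partial>(MM K :: (('d \<Rightarrow> int) \<Rightarrow> real) measure))"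
      using fi by (subst Bochner_Integration.integral_diff) auto
    also have "(\<integral>x. a \<partial>(MM K :: (('d \<Rightarrow> int) \<Rightarrow> real) measure)) = a"
      using prob_space by simp
    finally show ?thesis by (simp add: a_def)
  qed
  finally show ?thesis by simp
qed

lemma (in prob_space) covar_CS:
  fixes f g :: "'a \<Rightarrow> real"
  assumes [measurable]: "f \<in> borel_measurable M" "g \<in> borel_measurable M"
    and f2: "integrable M (\<lambda>x. (f x)\<^sup>2)" and g2: "integrable M (\<lambda>x. (g x)\<^sup>2)"
  shows "(covar M f g)\<^sup>2 \<le> covar M f f * covar M g g"
proof -
  have fi: "integrable M f" by (rule square_integrable_imp_integrable[OF _ f2]) simp
  have gi: "integrable M g" by (rule square_integrable_imp_integrable[OF _ g2]) simp
  define a where "a = (\<integral>y. f y \<partial>M)"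
  define b where "b = (\<integral>y. g y \<partial>M)"
  define F where "F x = f x - a" for x
  define G where "G x = g x - b" for x
  have [measurable]: "F \<in> borel_measurable M"
    unfolding F_def[abs_def] by measurable
  have [measurable]: "G \<in> borel_measurable M"
    unfolding G_def[abs_def] by measurable
  have F2: "integrable M (\<lambda>x. (F x)\<^sup>2)"
  proof -
    have "(\<lambda>x. (F x)\<^sup>2) = (\<lambda>x. (f x)\<^sup>2 - 2 * a * f x + a\<^sup>2)"
      by (auto simp: F_def power2_eq_square algebra_simps)
    then show ?thesis using f2 fi by simp
  qed
  have G2: "integrable M (\<lambda>x. (G x)\<^sup>2)"
  proof -
    have "(\<lambda>x. (G x)\<^sup>2) = (\<lambda>x. (g x)\<^sup>2 - 2 * b * g x + b\<^sup>2)"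
      by (auto simp: G_def power2_eq_square algebra_simps)
    then show ?thesis using g2 gi by simp
  qed
  have FG: "integrable M (\<lambda>x. F x * G x)"
  proof (rule Bochner_Integration.integrable_bound[where f="\<lambda>x. (F x)\<^sup>2 + (G x)\<^sup>2"])
    show "integrable M (\<lambda>x. (F x)\<^sup>2 + (G x)\<^sup>2)" using F2 G2 by simp
    show "(\<lambda>x. F x * G x) \<in> borel_measurable M" by simp
    show "AE x in M. norm (F x * G x) \<le> norm ((F x)\<^sup>2 + (G x)\<^sup>2)"
    proof (rule AE_I2)
      fix x
      have "0 \<le> (\<bar>F x\<bar> - \<bar>G x\<bar>)\<^sup>2" by simp
      then have "2 * \<bar>F x * G x\<bar> \<le> (F x)\<^sup>2 + (G x)\<^sup>2"
        by (simp add: power2_eq_square algebra_simps abs_mult)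
      then show "norm (F x * G x) \<le> norm ((F x)\<^sup>2 + (G x)\<^sup>2)" by simp
    qed
  qed
  have FF: "integrable M (\<lambda>x. F x * F x)" using F2 by (simp add: power2_eq_square)
  have GG: "integrable M (\<lambda>x. G x * G x)" using G2 by (simp add: power2_eq_square)
  define A where "A = (\<integral>x. F x * F x \<partial>M)"
  define B where "B = (\<integral>x. G x * G x \<partial>M)"
  define C where "C = (\<integral>x. F x * G x \<partial>M)"
  have quad: "0 \<le> t\<^sup>2 * A - 2 * t * C + B" for t :: real
  proof -
    have e: "(\<lambda>x. (t * F x - G x) * (t * F x - G x)) = (\<lambda>x. (t\<^sup>2 * (F x * F x) - 2 * t * (F x * G x)) + G x * G x)"
      by (auto simp: power2_eq_square algebra_simps)
    have i1: "integrable M (\<lambda>x. t\<^sup>2 * (F x * F x))" using FF by (rule integrable_mult_right)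
    have i2: "integrable M (\<lambda>x. 2 * t * (F x * G x))" using FG by (rule integrable_mult_right)
    have "0 \<le> (\<integral>x. (t * F x - G x) * (t * F x - G x) \<partial>M)" by simp
    also have "\<dots> = (\<integral>x. t\<^sup>2 * (F x * F x) - 2 * t * (F x * G x) \<partial>M) + (\<integral>x. G x * G x \<partial>M)"
      unfolding e by (rule Bochner_Integration.integral_add[OF Bochner_Integration.integrable_diff[OF i1 i2] GG])
    also have "(\<integral>x. t\<^sup>2 * (F x * F x) - 2 * t * (F x * G x) \<partial>M) =
        (\<integral>x. t\<^sup>2 * (F x * F x) \<partial>M) - (\<integral>x. 2 * t * (F x * G x) \<partial>M)"
      by (rule Bochner_Integration.integral_diff[OF i1 i2])
    also have "(\<integral>x. t\<^sup>2 * (F x * F x) \<partial>M) = t\<^sup>2 * A"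
      unfolding A_def by (rule integral_mult_right_zero)
    also have "(\<integral>x. 2 * t * (F x * G x) \<partial>M) = 2 * t * C"
      unfolding C_def by (rule integral_mult_right_zero)
    finally show ?thesis unfolding B_def .
  qed
  have "C\<^sup>2 \<le> A * B"
  proof (cases "A = 0")
    case True
    have "C = 0"
    proof (rule ccontr)
      assume "C \<noteq> 0"
      have "0 \<le> ((B + 1) / (2 * C))\<^sup>2 * A - 2 * ((B + 1) / (2 * C)) * C + B" by (rule quad)
      then show False using True \<open>C \<noteq> 0\<close> by simp
    qed
    then show ?thesis using True by simp
  next
    case False
    have A0: "0 \<le> A" unfolding A_def by (rule integral_nonneg_AE) simp
    then have Ap: "0 < A" using False by simp
    have "0 \<le> (C / A)\<^sup>2 * A - 2 * (C / A) * C + B" by (rule quad)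
    then have "0 \<le> B - C\<^sup>2 / A" using Ap by (simp add: power2_eq_square field_simps)
    then show ?thesis using Ap by (simp add: field_simps)
  qed
  moreover have "covar M f g = C" unfolding covar_def C_def F_def G_def a_def b_def ..
  moreover have "covar M f f = A" unfolding covar_def A_def F_def a_def ..
  moreover have "covar M g g = B" unfolding covar_def B_def G_def b_def ..
  ultimately show ?thesis by simp
qed

lemma (in prob_space) abs_corr_le1:
  fixes f g :: "'a \<Rightarrow> real"
  assumes "f \<in> borel_measurable M" "g \<in> borel_measurable M"
    and "integrable M (\<lambda>x. (f x)\<^sup>2)" "integrable M (\<lambda>x. (g x)\<^sup>2)"
  shows "\<bar>corr M f g\<bar> \<le> 1"
proof -
  have cs: "(covar M f g)\<^sup>2 \<le> covar M f f * covar M g g" by (rule covar_CS[OF assms])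
  have nn: "0 \<le> covar M f f" "0 \<le> covar M g g" by (simp_all add: covar_def)
  show ?thesis
  proof (cases "covar M f f * covar M g g = 0")
    case True
    show ?thesis unfolding corr_def True by simp
  next
    case False
    have "0 \<le> covar M f f * covar M g g" using nn by (rule mult_nonneg_nonneg)
    then have "0 < covar M f f * covar M g g" using False by linarith
    then have pos: "0 < sqrt (covar M f f * covar M g g)" by (rule real_sqrt_gt_zero)
    have "sqrt ((covar M f g)\<^sup>2) \<le> sqrt (covar M f f * covar M g g)"
      by (rule real_sqrt_le_mono[OF cs])
    then have le: "\<bar>covar M f g\<bar> \<le> sqrt (covar M f f * covar M g g)"
      by (simp only: real_sqrt_abs)
    have "\<bar>corr M f g\<bar> = \<bar>covar M f g\<bar> / sqrt (covar M f f * covar M g g)"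
      unfolding corr_def abs_divide abs_of_pos[OF pos] ..
    also have "\<dots> \<le> 1" using le pos by (simp only: divide_le_eq_1_pos)
    finally show ?thesis .
  qed
qed

lemma max_corr_bounds:
  assumes P: "prob_space M" and A: "subalgebra M A" and B: "subalgebra M B"
  shows "max_corr M A B \<le> 1" "0 \<le> max_corr M A B"
proof -
  interpret prob_space M by (rule P)
  define X where "X = {0} \<union> {\<bar>corr M f g\<bar> | f g.
       f \<in> borel_measurable A \<and> g \<in> borel_measurable B \<and>
       integrable M (\<lambda>x. (f x)\<^sup>2) \<and> integrable M (\<lambda>x. (g x)\<^sup>2)}"
  have le: "x \<le> 1" if "x \<in> X" for x
  proof -
    { fix f g :: "'a \<Rightarrow> real" assume "f \<in> borel_measurable A" "g \<in> borel_measurable B"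
        "integrable M (\<lambda>x. (f x)\<^sup>2)" "integrable M (\<lambda>x. (g x)\<^sup>2)"
      then have "\<bar>corr M f g\<bar> \<le> 1"
        by (intro abs_corr_le1 measurable_from_subalg[OF A] measurable_from_subalg[OF B]) }
    then show ?thesis using that unfolding X_def by auto
  qed
  have bdd: "bdd_above X" using le by (rule bdd_aboveI)
  show "max_corr M A B \<le> 1"
    unfolding max_corr_def X_def[symmetric] by (rule cSup_least) (auto simp: X_def le)
  show "0 \<le> max_corr M A B"
    unfolding max_corr_def X_def[symmetric] by (rule cSup_upper[OF _ bdd]) (simp add: X_def)
qed

lemma max_corr_one:
  assumes P: "prob_space M" and A: "subalgebra M A" and B: "subalgebra M B"
    and f: "f \<in> borel_measurable A" and g: "g \<in> borel_measurable B"
    and f2: "integrable M (\<lambda>x. (f x)\<^sup>2)" and g2: "integrable M (\<lambda>x. (g x)\<^sup>2)"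
    and c: "\<bar>corr M f g\<bar> = 1"
  shows "max_corr M A B = 1"
proof -
  interpret prob_space M by (rule P)
  define X where "X = {0} \<union> {\<bar>corr M f g\<bar> | f g.
       f \<in> borel_measurable A \<and> g \<in> borel_measurable B \<and>
       integrable M (\<lambda>x. (f x)\<^sup>2) \<and> integrable M (\<lambda>x. (g x)\<^sup>2)}"
  have le: "x \<le> 1" if "x \<in> X" for x
  proof -
    { fix f g :: "'a \<Rightarrow> real" assume "f \<in> borel_measurable A" "g \<in> borel_measurable B"
        "integrable M (\<lambda>x. (f x)\<^sup>2)" "integrable M (\<lambda>x. (g x)\<^sup>2)"
      then have "\<bar>corr M f g\<bar> \<le> 1"
        by (intro abs_corr_le1 measurable_from_subalg[OF A] measurable_from_subalg[OF B]) }
    then show ?thesis using that unfolding X_def by auto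
  qed
  have "1 \<in> X" unfolding X_def using f g f2 g2 c[symmetric] by blast
  then show ?thesis
    unfolding max_corr_def X_def[symmetric] by (rule cSup_eq_maximum) (rule le)
qed

lemma max_corr_zero:
  assumes "\<And>f g. f \<in> borel_measurable A \<Longrightarrow> g \<in> borel_measurable B \<Longrightarrow>
       integrable M (\<lambda>x. (f x)\<^sup>2) \<Longrightarrow> integrable M (\<lambda>x. (g x)\<^sup>2) \<Longrightarrow> covar M f g = 0"
  shows "max_corr M A B = 0"
proof -
  have eq: "{0} \<union> {\<bar>corr M f g\<bar> | f g.
       f \<in> borel_measurable A \<and> g \<in> borel_measurable B \<and>
       integrable M (\<lambda>x. (f x)\<^sup>2) \<and> integrable M (\<lambda>x. (g x)\<^sup>2)} = {0}"
    using assms by (auto simp: corr_def)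
  show ?thesis unfolding max_corr_def eq by simp
qed

definition pA :: "nat \<Rightarrow> nat \<Rightarrow> int" where
  "pA R i = (if i = 0 then 0 else if i \<le> R + 1 then int R else int i - int R - 1)"
definition pB :: "nat \<Rightarrow> nat \<Rightarrow> int" where
  "pB R i = (if i = 0 then 0 else if i \<le> R + 1 then int i - 1 else int R)"
definition pt :: "'d \<Rightarrow> 'd \<Rightarrow> nat \<Rightarrow> nat \<Rightarrow> 'd \<Rightarrow> int" where
  "pt a b R i = (\<lambda>u. if u = a then pA R i else if u = b then pB R i else 0)"

lemma pA0[simp]: "pA R 0 = 0" unfolding pA_def by simp
lemma pB0[simp]: "pB R 0 = 0" unfolding pB_def by simp
lemma pt_0: "pt a b R 0 = (\<lambda>_. 0)"
  unfolding pt_def by (rule ext) simp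

lemma pt_a: "pt a b R i a = pA R i" by (simp add: pt_def)
lemma pt_b: "a \<noteq> b \<Longrightarrow> pt a b R i b = pB R i" by (simp add: pt_def)
lemma pt_other: "u \<noteq> a \<Longrightarrow> u \<noteq> b \<Longrightarrow> pt a b R i u = 0" by (simp add: pt_def)

lemma pt_inj:
  assumes ab: "a \<noteq> b" and R: "1 \<le> R"
  shows "inj_on (pt a b R) {..<2*R+1}"
proof (rule inj_onI)
  fix i j assume i: "i \<in> {..<2*R+1}" and j: "j \<in> {..<2*R+1}" and e: "pt a b R i = pt a b R j"
  have "pA R i = pA R j" using e pt_a by metis
  moreover have "pB R i = pB R j" using e pt_b[OF ab] by metis
  ultimately show "i = j" using i j R by (auto simp: pA_def pB_def split: if_splits)
qed

lemma pA_range: "i < 2*R+1 \<Longrightarrow> 0 \<le> pA R i \<and> pA R i \<le> int R"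
  by (auto simp: pA_def)
lemma pB_range: "i < 2*R+1 \<Longrightarrow> 0 \<le> pB R i \<and> pB R i \<le> int R"
  by (auto simp: pB_def)

lemma pt_contig:
  assumes ab: "a \<noteq> b" and i: "i < 2*R+1" and i': "i' < 2*R+1"
    and lt: "pt a b R i u < t" "t < pt a b R i' u"
  shows "\<exists>m<2*R+1. pt a b R m u = t"
proof (cases "u = a")
  case True
  then have t: "1 \<le> t" "t \<le> int R - 1" using lt pA_range[OF i] pA_range[OF i'] by (auto simp: pt_a)
  then have "nat t + R + 1 < 2*R+1" by linarith
  moreover have "pt a b R (nat t + R + 1) u = t" using True t by (simp add: pt_a pA_def)
  ultimately show ?thesis by blast
next
  case F: False
  show ?thesis
  proof (cases "u = b")
    case True
    then have t: "1 \<le> t" "t \<le> int R - 1" using lt pB_range[OF i] pB_range[OF i'] ab by (auto simp: pt_b)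
    then have "nat t + 1 < 2*R+1" by linarith
    moreover have "pt a b R (nat t + 1) u = t" using True t ab by (simp add: pt_b pB_def)
    ultimately show ?thesis by blast
  next
    case False
    then show ?thesis using lt F by (simp add: pt_other)
  qed
qed

lemma pt_pos: "1 \<le> i \<Longrightarrow> i < 2*R+1 \<Longrightarrow> 1 \<le> R \<Longrightarrow> 1 \<le> pA R i"
  by (auto simp: pA_def)

lemma pt_far: "1 \<le> i \<Longrightarrow> i < 2*R+1 \<Longrightarrow> pA R i = int R \<or> pB R i = int R"
  by (auto simp: pA_def pB_def)

lemma lat_norm_ge:
  fixes k :: "'d::finite \<Rightarrow> int"
  shows "\<bar>real_of_int (k c)\<bar> \<le> lat_norm k"
proof -
  have "(real_of_int (k c))\<^sup>2 \<le> (\<Sum>u\<in>UNIV. (real_of_int (k u))\<^sup>2)"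
    by (rule member_le_sum) auto
  then have "sqrt ((real_of_int (k c))\<^sup>2) \<le> lat_norm k"
    unfolding lat_norm_def by (rule real_sqrt_le_mono)
  then show ?thesis by simp
qed

lemma pt_norm:
  fixes a b :: "'d::finite"
  assumes ab: "a \<noteq> b" and i: "1 \<le> i" "i < 2*R+1"
  shows "real R \<le> lat_norm (\<lambda>u. 0 - pt a b R i u)"
proof -
  from pt_far[OF i] show ?thesis
  proof
    assume "pA R i = int R"
    then show ?thesis using lat_norm_ge[of "\<lambda>u. 0 - pt a b R i u" a] by (simp add: pt_a)
  next
    assume "pB R i = int R"
    then show ?thesis using lat_norm_ge[of "\<lambda>u. 0 - pt a b R i u" b] ab by (simp add: pt_b)
  qed
qed

lemma stationary: "strictly_stationary (MM K) (XX K p :: ('d::finite \<Rightarrow> int) \<Rightarrow> _)"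
  unfolding strictly_stationary_def
proof
  fix h :: "'d \<Rightarrow> int"
  define sh where "sh \<omega> = (\<lambda>m. \<omega> (\<lambda>u. m u + h u))" for \<omega> :: "('d \<Rightarrow> int) \<Rightarrow> real"
  define G where "G \<omega> = (\<lambda>k. XX K p k \<omega>)" for \<omega> :: "('d \<Rightarrow> int) \<Rightarrow> real"
  have Gm: "G \<in> measurable (MM K) (PiM UNIV (\<lambda>_. borel))"
    unfolding G_def by (rule measurable_PiM_single') (auto simp: space_PiM)
  have shm: "sh \<in> measurable (MM K) (MM K)"
  proof -
    have "(\<lambda>\<omega> m. \<omega> (\<lambda>u. m u + h u)) \<in> measurable (PiM UNIV (\<lambda>_. QQ K)) (PiM UNIV (\<lambda>_::'d \<Rightarrow> int. QQ K))"
      by (rule measurable_PiM_single') (auto simp: space_PiM intro: measurable_component_singleton)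
    then show ?thesis by (simp add: MM_def sh_def[abs_def])
  qed
  have "distr (MM K) (MM K) sh = MM K"
  proof -
    have "inj (\<lambda>m::'d \<Rightarrow> int. \<lambda>u. m u + h u)"
      by (rule injI) (metis add_right_cancel ext)
    then have "distr (PiM UNIV (\<lambda>_. QQ K)) (PiM UNIV (\<lambda>_. QQ K)) (\<lambda>\<omega>. \<lambda>n\<in>UNIV. \<omega> (\<lambda>u. n u + h u)) = PiM UNIV (\<lambda>_. QQ K)"
      using distr_PiM_reindex[of UNIV "\<lambda>_. QQ K" "\<lambda>m::'d \<Rightarrow> int. \<lambda>u. m u + h u" UNIV] prob_space_QQ by simp
    moreover have "(\<lambda>\<omega>. \<lambda>n\<in>UNIV. \<omega> (\<lambda>u. n u + h u)) = sh" by (simp add: sh_def[abs_def] restrict_def)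
    ultimately show ?thesis by (simp add: MM_def)
  qed
  moreover have eq: "(\<lambda>\<omega> k. XX K p (\<lambda>u. k u + h u) \<omega>) = G \<circ> sh"
  proof -
    have e: "(\<lambda>u. k u + h u - p i u) = (\<lambda>u. k u - p i u + h u)" for k i by (simp add: algebra_simps)
    show ?thesis by (simp add: fun_eq_iff G_def sh_def XX_def Bt_def e)
  qed
  ultimately show "distr (MM K) (PiM UNIV (\<lambda>_. borel)) (\<lambda>\<omega> k. XX K p (\<lambda>u. k u + h u) \<omega>) =
      distr (MM K) (PiM UNIV (\<lambda>_. borel)) (\<lambda>\<omega> k. XX K p k \<omega>)"
  proof -
    have Ge: "(\<lambda>\<omega> k. XX K p k \<omega>) = G" by (rule ext) (simp add: G_def)
    have "distr (MM K) (PiM UNIV (\<lambda>_. borel)) (G \<circ> sh) = distr (distr (MM K) (MM K) sh) (PiM UNIV (\<lambda>_. borel)) G"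
      using distr_distr[OF Gm shm] by simp
    then show ?thesis unfolding eq Ge using \<open>distr (MM K) (MM K) sh = MM K\<close> by simp
  qed
qed

lemma rb_meas[measurable]: "rb i \<in> measurable borel (count_space UNIV)"
proof -
  have "(\<lambda>z::int. bit (nat z) i) \<in> measurable (count_space UNIV) (count_space UNIV)" by simp
  from measurable_compose[OF measurable_real_floor this] show ?thesis
    by (simp add: rb_def[abs_def])
qed

lemma prod_parity:
  assumes "finite A"
  shows "(\<Prod>i\<in>A. (1 - 2 * (if P i then 1 else 0)) :: real) = (if even (card {i\<in>A. P i}) then 1 else -1)"
  using assms
proof (induction A rule: finite_induct)
  case empty
  then show ?case by simp
next
  case (insert x A)
  have fin: "finite {i\<in>A. P i}" using insert by simp
  show ?case
  proof (cases "P x")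
    case True
    have "{i\<in>insert x A. P i} = insert x {i\<in>A. P i}" using True by auto
    then have "card {i\<in>insert x A. P i} = Suc (card {i\<in>A. P i})" using insert fin by simp
    then show ?thesis using insert True by simp
  next
    case False
    have "{i\<in>insert x A. P i} = {i\<in>A. P i}" using False by auto
    then show ?thesis using insert False by simp
  qed
qed

definition E0 :: "nat \<Rightarrow> (nat \<Rightarrow> 'd::finite \<Rightarrow> int) \<Rightarrow> (('d \<Rightarrow> int) \<Rightarrow> real) set" where
  "E0 K p = ev K p {(0, \<lambda>_. 0)} (\<lambda>_. {True})"

lemma E0_f:
  assumes "1 \<le> K"
  shows "(indicator (E0 K p) :: _ \<Rightarrow> real) = (\<lambda>\<omega>. if rb 0 (XX K p (\<lambda>_. 0) \<omega>) then 1 else 0)"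
  using assms by (auto simp: fun_eq_iff E0_def ev_def XX_def rb_enc)

lemma E0_g:
  assumes "1 \<le> K" and p0: "p 0 = (\<lambda>_. 0)"
  shows "(indicator (E0 K p) :: _ \<Rightarrow> real) = (\<lambda>\<omega>. (1 - (\<Prod>i\<in>{1..<K}. (1 - 2 * (if rb i (XX K p (p i) \<omega>) then 1 else 0)))) / 2)"
proof
  fix \<omega>
  have b: "rb i (XX K p (p i) \<omega>) = rb i (\<omega> (\<lambda>_. 0))" if "i \<in> {1..<K}" for i
    using that by (simp add: XX_def rb_enc Bt_def cmp_def)
  have s: "{j. 1 \<le> j \<and> j < K \<and> rb j (\<omega> (\<lambda>_. 0))} = {i \<in> {1..<K}. rb i (XX K p (p i) \<omega>)}"
    using b by auto
  have "(\<Prod>i\<in>{1..<K}. (1 - 2 * (if rb i (XX K p (p i) \<omega>) then 1 else 0)) :: real) =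
     (if even (card {i \<in> {1..<K}. rb i (XX K p (p i) \<omega>)}) then 1 else -1)"
    by (rule prod_parity) simp
  moreover have "\<omega> \<in> E0 K p \<longleftrightarrow> odd (card {i \<in> {1..<K}. rb i (XX K p (p i) \<omega>)})"
    unfolding s[symmetric] using p0 by (simp add: E0_def ev_def Bt_def cmp_def)
  ultimately show "(indicator (E0 K p) \<omega> :: real) = (1 - (\<Prod>i\<in>{1..<K}. (1 - 2 * (if rb i (XX K p (p i) \<omega>) then 1 else 0)))) / 2"
    by (auto simp: indicator_def)
qed

lemma witness:
  fixes p :: "nat \<Rightarrow> 'd::finite \<Rightarrow> int"
  assumes K2: "2 \<le> K" and p0: "p 0 = (\<lambda>_. 0)" and zS: "(\<lambda>_. 0) \<in> S"
    and pT: "\<And>i. i \<in> {1..<K} \<Longrightarrow> p i \<in> T"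
  shows "max_corr (MM K) (field_sigma (MM K) (XX K p) S) (field_sigma (MM K) (XX K p) T) = 1"
proof -
  interpret prob_space "MM K :: (('d \<Rightarrow> int) \<Rightarrow> real) measure" by (rule prob_space_MM)
  define f :: "(('d \<Rightarrow> int) \<Rightarrow> real) \<Rightarrow> real" where "f = indicator (E0 K p)"
  have K1: "1 \<le> K" using K2 by simp
  have fS: "f \<in> borel_measurable (field_sigma (MM K) (XX K p) S)"
  proof -
    have h: "(\<lambda>x. if rb 0 x then 1 else 0 :: real) \<in> borel_measurable borel" by measurable
    have "(\<lambda>x. if rb 0 x then 1 else 0 :: real) \<circ> XX K p (\<lambda>_. 0) \<in> borel_measurable (field_sigma (MM K) (XX K p) S)"
      by (rule measurable_comp[OF XX_meas_field[OF zS] h])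
    then show ?thesis unfolding f_def E0_f[OF K1] by (simp add: o_def)
  qed
  have fT: "f \<in> borel_measurable (field_sigma (MM K) (XX K p) T)"
  proof -
    have each: "(\<lambda>\<omega>. (1 - 2 * (if rb i (XX K p (p i) \<omega>) then 1 else 0)) :: real) \<in> borel_measurable (field_sigma (MM K) (XX K p) T)"
      if "i \<in> {1..<K}" for i
    proof -
      have h: "(\<lambda>x. (1 - 2 * (if rb i x then 1 else 0)) :: real) \<in> borel_measurable borel" by measurable
      show ?thesis using measurable_comp[OF XX_meas_field[OF pT[OF that]] h] by (simp add: o_def)
    qed
    have [measurable]: "(\<lambda>\<omega>. (\<Prod>i\<in>{1..<K}. (1 - 2 * (if rb i (XX K p (p i) \<omega>) then 1 else 0))) :: real) \<in> borel_measurable (field_sigma (MM K) (XX K p) T)"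
      by (rule borel_measurable_prod) (rule each)
    show ?thesis unfolding f_def E0_g[of K p, OF K1 p0] by measurable
  qed
  have Es: "E0 K p \<in> sets (MM K)" unfolding E0_def by (rule ev_sets) simp
  have fM[measurable]: "f \<in> borel_measurable (MM K)" unfolding f_def using Es by simp
  have PE: "measure (MM K) (E0 K p) = 1 / 2"
  proof -
    have "measure (MM K) (E0 K p) = (\<Prod>x\<in>{(0::nat, \<lambda>_::'d. 0::int)}. real (card ((\<lambda>_. {True}) x)) / 2)"
      unfolding E0_def
    proof (rule prob_ev)
      show "{(0::nat, \<lambda>_::'d. 0::int)} \<subseteq> {..<K} \<times> UNIV" using K2 by auto
      fix h assume "h \<in> hs p {(0::nat, \<lambda>_::'d. 0::int)}"
      have "1 \<notin> blkset p {(0::nat, \<lambda>_::'d. 0::int)} h" by (auto simp: blkset_def)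
      then show "\<exists>m<K. m \<notin> blkset p {(0::nat, \<lambda>_::'d. 0::int)} h" using K2 by (intro exI[of _ 1]) auto
    qed simp
    then show ?thesis by simp
  qed
  have f01: "f x = 0 \<or> f x = 1" for x by (simp add: f_def indicator_def)
  have f2: "integrable (MM K) (\<lambda>x. (f x)\<^sup>2)"
  proof (rule integrable_const_bound[where B=1])
    have "norm ((f x)\<^sup>2) \<le> 1" for x using f01[of x] by auto
    then show "AE x in MM K. norm ((f x)\<^sup>2) \<le> 1" by simp
  qed simp
  have Ef: "(\<integral>y. f y \<partial>MM K) = 1 / 2"
    unfolding f_def using Es PE by (simp add: emeasure_eq_measure)
  have cov: "covar (MM K) f f = 1 / 4"
  proof -
    have "(\<lambda>x. (f x - 1/2) * (f x - 1/2)) = (\<lambda>x. 1/4 :: real)"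
    proof
      fix x show "(f x - 1/2) * (f x - 1/2) = 1/4" using f01[of x] by auto
    qed
    then have "covar (MM K) f f = (\<integral>x. 1/4 \<partial>(MM K :: (('d \<Rightarrow> int) \<Rightarrow> real) measure))"
      unfolding covar_def Ef by simp
    also have "\<dots> = 1 / 4" using prob_space by simp
    finally show ?thesis .
  qed
  have c: "\<bar>corr (MM K) f f\<bar> = 1"
  proof -
    have "sqrt (1/4 * 1/4 :: real) = 1/4" by (rule real_sqrt_unique) (simp_all add: power2_eq_square)
    then show ?thesis unfolding corr_def cov by simp
  qed
  show ?thesis
    by (rule max_corr_one[OF prob_space_MM field_subalg field_subalg fS fT f2 f2 c])
qed

theorem lemma4p1:
  fixes N n :: nat
  assumes "CARD('d::finite) \<ge> 2" and "N \<ge> 2" and "n \<ge> 1"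
  shows "\<exists>(M :: ((('d \<Rightarrow> int) \<Rightarrow> real) measure)) (X :: ('d \<Rightarrow> int) \<Rightarrow> (('d \<Rightarrow> int) \<Rightarrow> real) \<Rightarrow> real).
           prob_space M \<and> (\<forall>k. X k \<in> borel_measurable M) \<and>
           strictly_stationary M X \<and> tuplewise_indep M N X \<and>
           rho_star M X n = 1 \<and> rho_half M X 1 = 1 \<and> rho_half M X 2 = 0"
proof -
  have "\<exists>a b::'d. a \<noteq> b"
  proof (rule ccontr)
    assume "\<not> (\<exists>a b::'d. a \<noteq> b)"
    then have e: "(UNIV :: 'd set) = {undefined}" by auto
    have "CARD('d) = card {undefined::'d}" unfolding e ..
    then show False using assms(1) by simp
  qed
  then obtain a b :: 'd where ab: "a \<noteq> b" by blast
  define R where "R = n + N"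
  define K where "K = 2 * R + 1"
  define p where "p = pt a b R"
  have R1: "1 \<le> R" using assms by (simp add: R_def)
  have K2: "2 \<le> K" using R1 by (simp add: K_def)
  have inj: "inj_on p {..<K}" unfolding p_def K_def by (rule pt_inj[OF ab R1])
  have p0: "p 0 = (\<lambda>_. 0)" by (simp add: p_def pt_0)
  have subalg: "\<And>S. subalgebra (MM K) (field_sigma (MM K) (XX K p) S)" by (rule field_subalg)
  have le1: "\<And>S T. max_corr (MM K) (field_sigma (MM K) (XX K p) S) (field_sigma (MM K) (XX K p) T) \<le> 1"
    by (rule max_corr_bounds(1)[OF prob_space_MM subalg subalg])
  have pa: "1 \<le> p i a" if "i \<in> {1..<K}" for i
    using that R1 pt_pos[of i R] by (auto simp: p_def pt_a K_def)
  have tup: "tuplewise_indep (MM K) N (XX K p)"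
    unfolding tuplewise_indep_def
  proof (intro allI impI)
    fix Ks :: "('d \<Rightarrow> int) set" assume Ks: "finite Ks \<and> card Ks = N"
    show "prob_space.indep_vars (MM K) (\<lambda>_. borel) (XX K p) Ks"
    proof (rule X_indep)
      show "finite Ks" using Ks by simp
      show "card Ks < K" using Ks by (simp add: K_def R_def)
      show "Ks \<noteq> {}" using Ks assms(2) by auto
    qed (use inj K2 in auto)
  qed
  have star: "rho_star (MM K) (XX K p) n = 1"
    unfolding rho_star_def
  proof (rule cSup_eq_maximum)
    define T where "T = p ` {1..<K}"
    have T1: "max_corr (MM K) (field_sigma (MM K) (XX K p) {\<lambda>_. 0}) (field_sigma (MM K) (XX K p) T) = 1"
      by (rule witness[of K p, OF K2 p0]) (auto simp: T_def)
    have Tne: "T \<noteq> {}" using K2 by (auto simp: T_def)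
    have disj: "{\<lambda>_. 0} \<inter> T = {}"
    proof -
      have "p i \<noteq> (\<lambda>_. 0)" if "i \<in> {1..<K}" for i
        using pa[OF that] by (metis less_numeral_extra(4) not_one_le_zero)
      then show ?thesis unfolding T_def by (metis (no_types, lifting) disjoint_iff image_iff singletonD)
    qed
    have dist: "real n \<le> lat_dist {\<lambda>_. 0} T"
      unfolding lat_dist_def
    proof (rule cInf_greatest)
      show "{lat_norm (\<lambda>u. s u - t u) |s t. s \<in> {\<lambda>_. 0} \<and> t \<in> T} \<noteq> {}" using Tne by blast
      fix x assume "x \<in> {lat_norm (\<lambda>u. s u - t u) |s t. s \<in> {\<lambda>_::'d. 0::int} \<and> t \<in> T}"
      then obtain i where i: "i \<in> {1..<K}" and x: "x = lat_norm (\<lambda>u. 0 - p i u)"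
        by (auto simp: T_def)
      have "real R \<le> x" unfolding x p_def using i by (intro pt_norm[OF ab]) (auto simp: K_def)
      then show "real n \<le> x" by (simp add: R_def)
    qed
    show "1 \<in> {max_corr (MM K) (field_sigma (MM K) (XX K p) S) (field_sigma (MM K) (XX K p) T) |S T.
          S \<noteq> {} \<and> T \<noteq> {} \<and> S \<inter> T = {} \<and> real n \<le> lat_dist S T}"
      using T1 Tne disj dist by (intro CollectI exI[of _ "{\<lambda>_. 0}"] exI[of _ T]) auto
  qed (use le1 in auto)
  have half1: "rho_half (MM K) (XX K p) 1 = 1"
    unfolding rho_half_def
  proof (rule cSup_eq_maximum)
    have "max_corr (MM K) (field_sigma (MM K) (XX K p) {k. k a \<le> 0}) (field_sigma (MM K) (XX K p) {k. 0 + int 1 \<le> k a}) = 1"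
      by (rule witness[of K p, OF K2 p0]) (use pa in auto)
    then show "1 \<in> {max_corr (MM K) (field_sigma (MM K) (XX K p) {k. k u \<le> j}) (field_sigma (MM K) (XX K p) {k. j + int 1 \<le> k u}) |j u. True}"
      by (intro CollectI exI[of _ 0] exI[of _ a]) simp
  qed (use le1 in auto)
  have half2: "rho_half (MM K) (XX K p) 2 = 0"
  proof -
    have z: "max_corr (MM K) (field_sigma (MM K) (XX K p) {k. k u \<le> j}) (field_sigma (MM K) (XX K p) {k. j + int 2 \<le> k u}) = 0" for u j
    proof (rule max_corr_zero)
      fix f g :: "(('d \<Rightarrow> int) \<Rightarrow> real) \<Rightarrow> real" assume f: "f \<in> borel_measurable (field_sigma (MM K) (XX K p) {k. k u \<le> j})"
        and g: "g \<in> borel_measurable (field_sigma (MM K) (XX K p) {k. j + int 2 \<le> k u})"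
        and f2: "integrable (MM K) (\<lambda>x. (f x)\<^sup>2)" and g2: "integrable (MM K) (\<lambda>x. (g x)\<^sup>2)"
      show "covar (MM K) f g = 0"
      proof (rule covar_slab_zero[OF _ _ f g f2 g2])
        show "{k. k u \<le> j} \<inter> {k. j + int 2 \<le> k u} = {}" by auto
        fix h :: "'d \<Rightarrow> int" and i i' assume i: "i < K" and i': "i' < K"
          and L: "(\<lambda>v. h v + p i v) \<in> {k. k u \<le> j}" and RR: "(\<lambda>v. h v + p i' v) \<in> {k. j + int 2 \<le> k u}"
        have "p i u < j + 1 - h u" "j + 1 - h u < p i' u" using L RR by auto
        then obtain m where m: "m < 2*R+1" "pt a b R m u = j + 1 - h u"
          using pt_contig[OF ab, of i R i' u "j + 1 - h u"] i i' by (auto simp: p_def K_def)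
        then show "\<exists>m<K. (\<lambda>v. h v + p m v) \<notin> {k. k u \<le> j} \<and> (\<lambda>v. h v + p m v) \<notin> {k. j + int 2 \<le> k u}"
          by (intro exI[of _ m]) (auto simp: p_def K_def)
      qed
    qed
    have "{max_corr (MM K) (field_sigma (MM K) (XX K p) {k. k u \<le> j}) (field_sigma (MM K) (XX K p) {k. j + int 2 \<le> k u}) |j u. True} = {0}"
      using z by auto
    then show ?thesis unfolding rho_half_def by simp
  qed
  show ?thesis
    by (intro exI[of _ "MM K"] exI[of _ "XX K p"] conjI prob_space_MM allI XX_meas stationary tup star half1 half2)
qed

end
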